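(* Let $k\ge2$, $n=2^k-1$, and let $C$ be the binary simplex $(n,k)$ code. Then every erasure pattern with at most $\frac{n-1}{2}$ erasures allows for parallel easy repair.
   Context: The binary simplex $(n,k)$ code, $n=2^k-1$, has generator matrix $G\in\mathbb F_2^{k\times n}$ whose columns $g_1,\dots,g_n$ are all the distinct nonzero vectors of $\mathbb F_2^k$; its minimum distance is $2^{k-1}$. Nodes are the coordinates $c_1,\dots,c_n$ of codewords $c=uG$. An erasure pattern is a set $S^e\subseteq\{1,\dots,n\}$ of erased nodes; the other nodes are live. A node $c_i$ is related to distinct nodes $c_{j_1},\dots,c_{j_\gamma}$ (all different from $c_i$) if $g_i=g_{j_1}+\dots+g_{j_\gamma}$. An erased node allows for $r$-repair if it is related to $\gamma\le r$ nodes which are all live; easy repair means $2$-repair (so $\gamma\in\{1,2\}$). An erasure pattern allows for parallel easy repair if each of its erased nodes allows for easy repair with respect to the original set of live nodes. *)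

theory Defs
  imports "HOL-Analysis.Analysis" "HOL-Library.Z2"
begin

text \<open>Columns of the generator matrix are given by g :: nat => vector; node i (1 <= i <= n)
  corresponds to column g i.\<close>

definition related :: "(nat \<Rightarrow> 'a::comm_monoid_add) \<Rightarrow> nat \<Rightarrow> nat set \<Rightarrow> bool" where
  "related g i J \<longleftrightarrow> finite J \<and> J \<noteq> {} \<and> i \<notin> J \<and> g i = (\<Sum>j\<in>J. g j)"

definition allows_repair :: "nat \<Rightarrow> (nat \<Rightarrow> 'a::comm_monoid_add) \<Rightarrow> nat set \<Rightarrow> nat \<Rightarrow> bool" where
  "allows_repair r g live i \<longleftrightarrow> (\<exists>J. related g i J \<and> card J \<le> r \<and> J \<subseteq> live)"

definition allows_easy_repair :: "(nat \<Rightarrow> 'a::comm_monoid_add) \<Rightarrow> nat set \<Rightarrow> nat \<Rightarrow> bool" where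
  "allows_easy_repair g live i \<longleftrightarrow> allows_repair 2 g live i"

definition allows_parallel_easy_repair :: "(nat \<Rightarrow> 'a::comm_monoid_add) \<Rightarrow> nat \<Rightarrow> nat set \<Rightarrow> bool" where
  "allows_parallel_easy_repair g n S \<longleftrightarrow> (\<forall>i\<in>S. allows_easy_repair g ({1..n} - S) i)"

text \<open>g is a simplex generator matrix of dimension k = CARD('k): its columns g 1, ..., g n
  (n = 2^k - 1) are exactly the distinct nonzero vectors of F_2^k.\<close>
definition simplex_generator :: "(nat \<Rightarrow> bit ^ 'k) \<Rightarrow> bool" where
  "simplex_generator g \<longleftrightarrow> bij_betw g {1..2 ^ CARD('k) - 1} (UNIV - {0})"

end

theory Submission
  imports Defs
begin

lemma bit_add_self: "(x::bit) + x = 0"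
  by (cases x) (simp_all add: one_add_one[symmetric] del: one_add_one)

lemma vec_add_self: "(a::bit^'k) + a = 0"
  by (simp add: vec_eq_iff bit_add_self)

theorem theorem3p1:
  fixes g :: "nat \<Rightarrow> bit ^ 'k" and n :: nat and S :: "nat set"
  assumes "CARD('k) \<ge> 2"
    and "n = 2 ^ CARD('k) - 1"
    and "simplex_generator g"
    and "S \<subseteq> {1..n}"
    and "real (card S) \<le> (real n - 1) / 2"
  shows "allows_parallel_easy_repair g n S"
  unfolding allows_parallel_easy_repair_def allows_easy_repair_def allows_repair_def
proof
  fix i assume iS: "i \<in> S"
  have bij: "bij_betw g {1..n} (UNIV - {0})" using assms(2,3) by (simp add: simplex_generator_def)
  have fin: "finite (UNIV - {0::bit^'k})" using bij bij_betw_finite by blast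
  have cardU: "card (UNIV - {0::bit^'k}) = n" using bij bij_betw_same_card by fastforce
  have iI: "i \<in> {1..n}" using iS assms(4) by blast
  define v where "v = g i"
  have gi: "g i = v" using v_def by simp
  have v0: "v \<noteq> 0" using bij iI unfolding v_def bij_betw_def by blast
  define N where "N = UNIV - {0} - {v}"
  have cardN: "card N = n - 1" unfolding N_def using cardU fin v0 by (simp add: card_Diff_singleton)
  define B where "B = g ` (S - {i})"
  have finS: "finite S" using assms(4) finite_subset by blast
  have cardB: "card B \<le> card S - 1"
    unfolding B_def using card_image_le[of "S - {i}" g] finS iS by simp
  have k2: "(4::nat) \<le> 2 ^ CARD('k)"
    using power_increasing[OF assms(1), of "2::nat"] by simp
  have n3: "n \<ge> 3" using assms(2) k2 by simp
  have "real (2 * card S) \<le> real (n - 1)" using assms(5) n3 by (simp add: of_nat_diff)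
  hence cS: "2 * card S \<le> n - 1" by linarith
  have cS1: "card S \<ge> 1" using iS finS card_0_eq by fastforce
  have "\<exists>a\<in>N. a \<notin> B \<and> a + v \<notin> B"
  proof (rule ccontr)
    assume nt: "\<not> ?thesis"
    have "N \<subseteq> B \<union> (\<lambda>b. b + v) ` B"
    proof
      fix a assume "a \<in> N"
      with nt have "a \<in> B \<or> a + v \<in> B" by blast
      moreover have "a = (a + v) + v" by (simp add: add.assoc vec_add_self)
      ultimately show "a \<in> B \<union> (\<lambda>b. b + v) ` B" by (metis UnI1 UnI2 image_eqI)
    qed
    moreover have fB: "finite B" using finS B_def by simp
    ultimately have "card N \<le> card (B \<union> (\<lambda>b. b + v) ` B)"
      by (intro card_mono) auto
    also have "\<dots> \<le> card B + card ((\<lambda>b. b + v) ` B)" by (rule card_Un_le)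
    also have "\<dots> \<le> 2 * card B" using card_image_le[OF fB, of "\<lambda>b. b + v"] by simp
    finally show False using cardN cardB cS cS1 n3 by linarith
  qed
  then obtain a where aN: "a \<in> N" and aB: "a \<notin> B" and avB: "a + v \<notin> B" by metis
  have a0: "a \<noteq> 0" and av: "a \<noteq> v" using aN unfolding N_def by blast+
  have av0: "a + v \<noteq> 0"
  proof
    assume h: "a + v = 0"
    have "a = (a + v) + v" by (simp only: add.assoc vec_add_self add_0_right)
    also have "\<dots> = v" by (simp only: h add_0_left)
    finally show False using av by simp
  qed
  have surj: "g ` {1..n} = UNIV - {0}" using bij by (simp add: bij_betw_def)
  have "a \<in> g ` {1..n}" using a0 surj by simp
  then obtain j where j: "j \<in> {1..n}" "g j = a" by (metis imageE)
  have "a + v \<in> g ` {1..n}" using av0 surj by simp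
  then obtain l where l: "l \<in> {1..n}" "g l = a + v" by (metis imageE)
  have jl: "j \<noteq> l"
  proof
    assume "j = l" hence h: "a = a + v" using j(2) l(2) by metis
    have "a + a = a + (a + v)" using h by (rule arg_cong[where f="(+) a"])
    hence "0 = v" by (simp only: add.assoc[symmetric] vec_add_self add_0_left)
    thus False using v0 by simp
  qed
  have ij: "i \<noteq> j" using j(2) av gi by metis
  have il: "i \<noteq> l"
  proof
    assume "i = l" hence "a + v = v" using l(2) gi by metis
    thus False using a0 by simp
  qed
  have jS: "j \<notin> S"
  proof
    assume "j \<in> S" hence "j \<in> S - {i}" using ij by blast
    hence "g j \<in> B" unfolding B_def by (rule imageI)
    thus False using j(2) aB by simp
  qed
  have lS: "l \<notin> S"
  proof
    assume "l \<in> S" hence "l \<in> S - {i}" using il by blast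
    hence "g l \<in> B" unfolding B_def by (rule imageI)
    thus False using l(2) avB by simp
  qed
  show "\<exists>J. related g i J \<and> card J \<le> 2 \<and> J \<subseteq> {1..n} - S"
  proof (intro exI conjI)
    show "related g i {j, l}" unfolding related_def using jl ij il j l gi
      by (simp add: add.assoc[symmetric] vec_add_self)
    show "card {j, l} \<le> 2" using jl by simp
    show "{j, l} \<subseteq> {1..n} - S" using j l jS lS by blast
  qed
qed

end
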